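(* Let $X$ be a topological space, let $Y$ be a functionally Hausdorff space, let $S$ be a dense subset of $X$ and let $f:S\to Y$ be continuous. Then the following are equivalent: (1) $f$ has a continuous extension to $X$; (2) for every family $\{A_\beta\}$ of closed subsets of $Y$ with $\bigcap_\beta A_\beta=\emptyset$ one has $\bigcap_\beta\overline{f^{-1}(A_\beta)}=\emptyset$ (closures in $X$), and for every open set $V$ of $Y$ the set $X_{\theta^\omega}(f^{-1}(V))$ is open in $X$.
   Context: A space is functionally Hausdorff if any two distinct points can be separated by a continuous real-valued function. $\mathcal N(x)$ is the set of open neighborhoods of $x$ in $X$. For a subset $A$ of $Y$ and an ordinal $\alpha>0$, an $\alpha$-hull of $A$ is an open set $U\supseteq A$ for which there exists a family $\{U_\beta\}_{\beta\le\alpha}$ of open sets containing $A$ with $\mathrm{cl}\,U_\beta\subseteq U_{\beta+1}$ whenever $\beta+1\le\alpha$ and $U=U_\alpha=\bigcup_{\beta\le\alpha}U_\beta$. For $M\subseteq Y$, $\mathrm{cl}_{\theta^\omega}M$ is the set of $y\in Y$ such that every $\omega$-hull $U$ of $y$ satisfies $\mathrm{cl}\,U\cap M\neq\emptyset$. For $V\subseteq Y$, $X_{\theta^\omega}(f^{-1}(V))$ is the set of points $x\in X$ with $\bigcap\{\mathrm{cl}_{\theta^\omega} f(P\cap S):P\in\mathcal N(x)\}\subseteq V$. *)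

theory Defs
  imports "HOL-Analysis.Analysis"
begin

definition functionally_hausdorff :: "'a topology \<Rightarrow> bool" where
  "functionally_hausdorff Y \<longleftrightarrow>
     (\<forall>x\<in>topspace Y. \<forall>y\<in>topspace Y. x \<noteq> y \<longrightarrow>
        (\<exists>g. continuous_map Y euclideanreal g \<and> g x \<noteq> g y))"

text \<open>An omega-hull of A: the family indexed by ordinals beta \<le> omega is given by
  Us n (n < omega) and Uom (beta = omega).\<close>
definition omega_hull :: "'a topology \<Rightarrow> 'a set \<Rightarrow> 'a set \<Rightarrow> bool" where
  "omega_hull Y A U \<longleftrightarrow>
     (\<exists>Us Uom. (\<forall>n. openin Y (Us n) \<and> A \<subseteq> Us n) \<and> openin Y Uom \<and> A \<subseteq> Uom \<and>
        (\<forall>n::nat. Y closure_of (Us n) \<subseteq> Us (Suc n)) \<and>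
        U = Uom \<and> U = (\<Union>n. Us n) \<union> Uom)"

definition closure_theta_omega :: "'a topology \<Rightarrow> 'a set \<Rightarrow> 'a set" where
  "closure_theta_omega Y M =
     {y \<in> topspace Y. \<forall>U. omega_hull Y {y} U \<longrightarrow> Y closure_of U \<inter> M \<noteq> {}}"

definition X_theta_omega :: "'a topology \<Rightarrow> 'b topology \<Rightarrow> 'a set \<Rightarrow> ('a \<Rightarrow> 'b) \<Rightarrow> 'b set \<Rightarrow> 'a set" where
  "X_theta_omega X Y S f V =
     {x \<in> topspace X.
        (\<Inter>P\<in>{P. openin X P \<and> x \<in> P}. closure_theta_omega Y (f ` (P \<inter> S))) \<subseteq> V}"

end

theory Submission
  imports Defs
begin

lemma hull_lt:
  assumes h: "continuous_map Y euclideanreal h" and y: "y \<in> topspace Y" and c: "h y < c"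
  shows "\<exists>U. omega_hull Y {y} U \<and> Y closure_of U \<subseteq> {z \<in> topspace Y. h z \<le> c}"
proof -
  define d where "d = c - h y"
  have d: "d > 0" using c by (simp add: d_def)
  define Us where "Us n = {z \<in> topspace Y. h z < c - d / (real n + 2)}" for n
  define Uom where "Uom = {z \<in> topspace Y. h z < c}"
  have opn: "openin Y {z \<in> topspace Y. h z < a}" for a
    using openin_continuous_map_preimage[OF h, of "{..<a}"] by simp
  have cls: "Y closure_of {z \<in> topspace Y. h z < a} \<subseteq> {z \<in> topspace Y. h z \<le> a}" for a
  proof (rule closure_of_minimal)
    show "{z \<in> topspace Y. h z < a} \<subseteq> {z \<in> topspace Y. h z \<le> a}" by auto
    show "closedin Y {z \<in> topspace Y. h z \<le> a}"
      using closedin_continuous_map_preimage[OF h, of "{..a}"] by simp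
  qed
  have yin: "y \<in> Us n" for n
  proof -
    have "d / (real n + 2) < d" using d by (simp add: divide_less_eq)
    then show ?thesis using y by (simp add: Us_def d_def)
  qed
  have step: "Y closure_of Us n \<subseteq> Us (Suc n)" for n
  proof -
    have "d / (3 + real n) < d / (real n + 2)" using d by (simp add: frac_less2)
    then have "c - d/(real n+2) < c - d/(real (Suc n) + 2)" by simp
    then show ?thesis using cls[of "c - d/(real n+2)"] unfolding Us_def by fastforce
  qed
  have sub: "Us n \<subseteq> Uom" for n
    using d unfolding Us_def Uom_def by (auto intro: order.strict_trans2 simp: divide_nonneg_pos)
  have "omega_hull Y {y} Uom"
    unfolding omega_hull_def
    apply (rule exI[of _ Us], rule exI[of _ Uom])
  proof (intro conjI allI)
    show "openin Y (Us n)" for n using opn unfolding Us_def by blast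
    show "{y} \<subseteq> Us n" for n using yin by blast
    show "openin Y Uom" using opn unfolding Uom_def by blast
    show "{y} \<subseteq> Uom" using y c unfolding Uom_def by blast
    show "Y closure_of Us n \<subseteq> Us (Suc n)" for n by (rule step)
    show "Uom = Uom" ..
    show "Uom = (\<Union>n. Us n) \<union> Uom" using sub by blast
  qed
  moreover have "Y closure_of Uom \<subseteq> {z \<in> topspace Y. h z \<le> c}"
    using cls unfolding Uom_def by blast
  ultimately show ?thesis by blast
qed

lemma sep:
  assumes fh: "functionally_hausdorff Y" and y1: "y1 \<in> topspace Y" and y2: "y2 \<in> topspace Y"
    and ne: "y1 \<noteq> y2"
  shows "\<exists>U1 U2 A1 A2 W. omega_hull Y {y1} U1 \<and> omega_hull Y {y2} U2 \<and> closedin Y A1 \<and>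
     closedin Y A2 \<and> A1 \<inter> A2 = {} \<and> Y closure_of U1 \<subseteq> A1 \<and> Y closure_of U2 \<subseteq> A2 \<and>
     openin Y W \<and> y2 \<in> W \<and> W \<inter> A1 = {}"
proof -
  obtain g where g: "continuous_map Y euclideanreal g" "g y1 \<noteq> g y2"
    using fh y1 y2 ne unfolding functionally_hausdorff_def by blast
  obtain h where h: "continuous_map Y euclideanreal h" "h y1 < h y2"
  proof (cases "g y1 < g y2")
    case True then show ?thesis using that g by blast
  next
    case False
    then have "(\<lambda>z. - g z) y1 < (\<lambda>z. - g z) y2" using g(2) by simp
    moreover have "continuous_map Y euclideanreal (\<lambda>z. - g z)" using g(1) by (simp add: continuous_map_minus)
    ultimately show ?thesis using that by blast
  qed
  define c1 where "c1 = h y1 + (h y2 - h y1)/3"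
  define c2 where "c2 = h y2 - (h y2 - h y1)/3"
  have lt: "h y1 < c1" "c1 < c2" "c2 < h y2" using h(2) by (simp_all add: c1_def c2_def field_simps)
  obtain U1 where U1: "omega_hull Y {y1} U1" "Y closure_of U1 \<subseteq> {z \<in> topspace Y. h z \<le> c1}"
    using hull_lt[OF h(1) y1 lt(1)] by blast
  have hm: "continuous_map Y euclideanreal (\<lambda>z. - h z)" using h(1) by (simp add: continuous_map_minus)
  obtain U2 where U2: "omega_hull Y {y2} U2" "Y closure_of U2 \<subseteq> {z \<in> topspace Y. - h z \<le> - c2}"
  proof -
    have "(\<lambda>z. - h z) y2 < -c2" using lt(3) by simp
    from hull_lt[OF hm y2 this] show ?thesis using that by blast
  qed
  have c1: "closedin Y {z \<in> topspace Y. h z \<le> c1}"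
    using closedin_continuous_map_preimage[OF h(1), of "{..c1}"] by simp
  have c2: "closedin Y {z \<in> topspace Y. - h z \<le> - c2}"
    using closedin_continuous_map_preimage[OF hm, of "{..-c2}"] by simp
  have o: "openin Y {z \<in> topspace Y. h z > c1}"
    using openin_continuous_map_preimage[OF h(1), of "{c1<..}"] by simp
  have d: "{z \<in> topspace Y. h z \<le> c1} \<inter> {z \<in> topspace Y. - h z \<le> - c2} = {}"
      using lt(2) by auto
  have w: "y2 \<in> {z \<in> topspace Y. h z > c1}" using y2 lt by simp
  have w2: "{z \<in> topspace Y. h z > c1} \<inter> {z \<in> topspace Y. h z \<le> c1} = {}" by auto
  show ?thesis
    apply (rule exI[of _ U1], rule exI[of _ U2], rule exI[of _ "{z \<in> topspace Y. h z \<le> c1}"],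
        rule exI[of _ "{z \<in> topspace Y. - h z \<le> - c2}"], rule exI[of _ "{z \<in> topspace Y. h z > c1}"])
    using U1 U2 c1 c2 o d w w2 by blast
qed


lemma hull_open: "omega_hull Y {y} U \<Longrightarrow> openin Y U \<and> y \<in> U"
  unfolding omega_hull_def by blast

lemma cl_sub:
  assumes "y \<in> Y closure_of M"
  shows "y \<in> closure_theta_omega Y M"
proof -
  have y: "y \<in> topspace Y" using assms by (simp add: in_closure_of)
  { fix U assume HU: "omega_hull Y {y} U"
    have U: "openin Y U" "y \<in> U" using hull_open[OF HU] by auto
    have "\<forall>T. y \<in> T \<and> openin Y T \<longrightarrow> (\<exists>m. m \<in> M \<and> m \<in> T)"
      using assms by (simp add: in_closure_of)
    then obtain m where "m \<in> M" "m \<in> U" using U by blast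
    moreover have "U \<subseteq> Y closure_of U" by (rule closure_of_subset[OF openin_subset[OF U(1)]])
    ultimately have "Y closure_of U \<inter> M \<noteq> {}" by blast }
  then show ?thesis using y unfolding closure_theta_omega_def by blast
qed

theorem corollary3p5:
  fixes X :: "'a topology" and Y :: "'b topology" and S :: "'a set" and f :: "'a \<Rightarrow> 'b"
  assumes "functionally_hausdorff Y"
    and "S \<subseteq> topspace X" and "X closure_of S = topspace X"
    and "continuous_map (subtopology X S) Y f"
  shows "(\<exists>g. continuous_map X Y g \<and> (\<forall>x\<in>S. g x = f x)) \<longleftrightarrow>
         ((\<forall>\<A>. (\<forall>A\<in>\<A>. closedin Y A) \<and> topspace Y \<inter> \<Inter>\<A> = {} \<longrightarrow>
              topspace X \<inter> (\<Inter>A\<in>\<A>. X closure_of {x \<in> S. f x \<in> A}) = {}) \<and>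
          (\<forall>V. openin Y V \<longrightarrow> openin X (X_theta_omega X Y S f V)))"
proof -
  note fh = assms(1) and SX = assms(2) and dense = assms(3) and fc = assms(4)
  define K where "K x = (\<Inter>P\<in>{P. openin X P \<and> x \<in> P}. closure_theta_omega Y (f ` (P \<inter> S)))" for x
  have fS: "f ` S \<subseteq> topspace Y"
    using continuous_map_image_subset_topspace[OF fc] SX by (simp add: topspace_subtopology Int_absorb1)
  have meet: "\<exists>s\<in>S. s \<in> P" if "openin X P" "x \<in> P" for x P
  proof -
    have "x \<in> X closure_of S" using dense openin_subset that by blast
    then show ?thesis using that by (auto simp: in_closure_of)
  qed
  have Ktop: "K x \<subseteq> topspace Y" if "x \<in> topspace X" for x
  proof -
    have "K x \<subseteq> closure_theta_omega Y (f ` (topspace X \<inter> S))"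
      unfolding K_def using that by blast
    also have "\<dots> \<subseteq> topspace Y" unfolding closure_theta_omega_def by blast
    finally show ?thesis .
  qed
  have XK: "X_theta_omega X Y S f V = {x \<in> topspace X. K x \<subseteq> V}" for V
    unfolding X_theta_omega_def K_def ..
  have inK: "x \<in> X closure_of {s \<in> S. f s \<in> A}"
    if x: "x \<in> topspace X" and y: "y \<in> K x" and U: "omega_hull Y {y} U" "Y closure_of U \<subseteq> A" for x y U A
  proof -
    { fix T assume T: "x \<in> T" "openin X T"
      then have "y \<in> closure_theta_omega Y (f ` (T \<inter> S))" using y unfolding K_def by blast
      then have "Y closure_of U \<inter> f ` (T \<inter> S) \<noteq> {}" using U(1) unfolding closure_theta_omega_def by blast
      then have "\<exists>s. s \<in> {s \<in> S. f s \<in> A} \<and> s \<in> T" using U(2) by blast }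
    then show ?thesis using x by (simp add: in_closure_of)
  qed
  show ?thesis
  proof
    assume "\<exists>g. continuous_map X Y g \<and> (\<forall>x\<in>S. g x = f x)"
    then obtain g where g: "continuous_map X Y g" and ext: "\<forall>x\<in>S. g x = f x" by blast
    have gtop: "g x \<in> topspace Y" if "x \<in> topspace X" for x
      using continuous_map_image_subset_topspace[OF g] that by blast
    have Keq: "K x = {g x}" if x: "x \<in> topspace X" for x
    proof
      show "K x \<subseteq> {g x}"
      proof
        fix y assume y: "y \<in> K x"
        show "y \<in> {g x}"
        proof (rule ccontr)
          assume "y \<notin> {g x}"
          then have ne: "y \<noteq> g x" by simp
          have yt: "y \<in> topspace Y" using Ktop[OF x] y by blast
          obtain U1 U2 A1 A2 W where sp: "omega_hull Y {y} U1" "Y closure_of U1 \<subseteq> A1"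
            "openin Y W" "g x \<in> W" "W \<inter> A1 = {}"
            using sep[OF fh yt gtop[OF x] ne] by blast
          define P where "P = {z \<in> topspace X. g z \<in> W}"
          have P: "openin X P" "x \<in> P" using openin_continuous_map_preimage[OF g sp(3)] x sp(4)
            unfolding P_def by auto
          have "y \<in> closure_theta_omega Y (f ` (P \<inter> S))" using y P unfolding K_def by blast
          then have "Y closure_of U1 \<inter> f ` (P \<inter> S) \<noteq> {}" using sp(1) unfolding closure_theta_omega_def by blast
          then obtain s where "s \<in> P" "s \<in> S" "f s \<in> A1" using sp(2) by blast
          then show False using ext sp(5) unfolding P_def by auto
        qed
      qed
      show "{g x} \<subseteq> K x"
      proof -
        { fix P assume P: "openin X P" "x \<in> P"
          have H: "Y closure_of U \<inter> f ` (P \<inter> S) \<noteq> {}" if U: "omega_hull Y {g x} U" for U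
          proof -
            have Uo: "openin Y U \<and> g x \<in> U" using hull_open[OF U] .
            define Q where "Q = P \<inter> {z \<in> topspace X. g z \<in> U}"
            have "openin X Q" unfolding Q_def
              by (intro openin_Int P(1) openin_continuous_map_preimage[OF g]) (use Uo in blast)
            moreover have "x \<in> Q" unfolding Q_def using P(2) x Uo by blast
            ultimately obtain s where s: "s \<in> S" "s \<in> Q" using meet by blast
            have sP: "s \<in> P" and gs: "g s \<in> U" using s(2) unfolding Q_def by auto
            have fs: "f s \<in> U" using gs ext s(1) by simp
            have "U \<subseteq> Y closure_of U" by (rule closure_of_subset[OF openin_subset]) (use Uo in blast)
            then have "f s \<in> Y closure_of U" using fs by blast
            moreover have "f s \<in> f ` (P \<inter> S)" using sP s(1) by blast
            ultimately show ?thesis by blast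
          qed
          have "g x \<in> closure_theta_omega Y (f ` (P \<inter> S))"
            unfolding closure_theta_omega_def using gtop[OF x] H by blast }
        then show ?thesis unfolding K_def by blast
      qed
    qed
    show "(\<forall>\<A>. (\<forall>A\<in>\<A>. closedin Y A) \<and> topspace Y \<inter> \<Inter>\<A> = {} \<longrightarrow>
              topspace X \<inter> (\<Inter>A\<in>\<A>. X closure_of {x \<in> S. f x \<in> A}) = {}) \<and>
          (\<forall>V. openin Y V \<longrightarrow> openin X (X_theta_omega X Y S f V))"
    proof (intro conjI allI impI)
      fix \<A> assume A: "(\<forall>A\<in>\<A>. closedin Y A) \<and> topspace Y \<inter> \<Inter>\<A> = {}"
      show "topspace X \<inter> (\<Inter>A\<in>\<A>. X closure_of {x \<in> S. f x \<in> A}) = {}"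
      proof (rule ccontr)
        assume "topspace X \<inter> (\<Inter>A\<in>\<A>. X closure_of {x \<in> S. f x \<in> A}) \<noteq> {}"
        then obtain x where x: "x \<in> topspace X" and xA: "\<And>A. A \<in> \<A> \<Longrightarrow> x \<in> X closure_of {x \<in> S. f x \<in> A}"
          by blast
        have "g x \<in> A" if "A \<in> \<A>" for A
        proof -
          have "{s \<in> S. f s \<in> A} \<subseteq> {z \<in> topspace X. g z \<in> A}" using SX ext by auto
          moreover have "closedin X {z \<in> topspace X. g z \<in> A}"
            using closedin_continuous_map_preimage[OF g] A that by blast
          ultimately have "X closure_of {s \<in> S. f s \<in> A} \<subseteq> {z \<in> topspace X. g z \<in> A}"
            by (rule closure_of_minimal)
          then show ?thesis using xA[OF that] by blast
        qed
        then show False using A gtop[OF x] by blast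
      qed
    next
      fix V assume V: "openin Y V"
      have "X_theta_omega X Y S f V = {x \<in> topspace X. g x \<in> V}" unfolding XK using Keq by auto
      then show "openin X (X_theta_omega X Y S f V)" using openin_continuous_map_preimage[OF g V] by simp
    qed
  next
    assume R: "(\<forall>\<A>. (\<forall>A\<in>\<A>. closedin Y A) \<and> topspace Y \<inter> \<Inter>\<A> = {} \<longrightarrow>
              topspace X \<inter> (\<Inter>A\<in>\<A>. X closure_of {x \<in> S. f x \<in> A}) = {}) \<and>
          (\<forall>V. openin Y V \<longrightarrow> openin X (X_theta_omega X Y S f V))"
    then have Ra: "\<And>\<A>. (\<forall>A\<in>\<A>. closedin Y A) \<Longrightarrow> topspace Y \<inter> \<Inter>\<A> = {} \<Longrightarrow>
              topspace X \<inter> (\<Inter>A\<in>\<A>. X closure_of {x \<in> S. f x \<in> A}) = {}"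
      and Rb: "\<And>V. openin Y V \<Longrightarrow> openin X (X_theta_omega X Y S f V)" by blast+
    have Kne: "\<exists>y. y \<in> K x" if x: "x \<in> topspace X" for x
    proof -
      define \<A> where "\<A> = {Y closure_of (f ` (P \<inter> S)) | P. openin X P \<and> x \<in> P}"
      have cl: "\<forall>A\<in>\<A>. closedin Y A" unfolding \<A>_def by (auto simp: closedin_closure_of)
      have "x \<in> X closure_of {s \<in> S. f s \<in> A}" if AA: "A \<in> \<A>" for A
      proof -
        obtain P where P: "openin X P" "x \<in> P" "A = Y closure_of (f ` (P \<inter> S))"
        proof -
          have "\<exists>P. A = Y closure_of (f ` (P \<inter> S)) \<and> openin X P \<and> x \<in> P"
            using AA unfolding \<A>_def by blast
          then show ?thesis using that by metis
        qed
        have "f ` (P \<inter> S) \<subseteq> topspace Y" using fS by blast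
        then have "f ` (P \<inter> S) \<subseteq> A" unfolding P(3) by (rule closure_of_subset)
        then have sub: "P \<inter> S \<subseteq> {s \<in> S. f s \<in> A}" by blast
        have "x \<in> X closure_of (P \<inter> S)"
        proof -
          { fix T assume T: "x \<in> T" "openin X T"
            have "openin X (T \<inter> P)" using T(2) P(1) by (rule openin_Int)
            moreover have "x \<in> T \<inter> P" using T(1) P(2) by blast
            ultimately obtain s where "s \<in> S" "s \<in> T \<inter> P" using meet by blast
            then have "\<exists>s. s \<in> P \<inter> S \<and> s \<in> T" by blast }
          then show ?thesis using x by (simp add: in_closure_of)
        qed
        then show ?thesis using closure_of_mono[OF sub] by blast
      qed
      then have "topspace X \<inter> (\<Inter>A\<in>\<A>. X closure_of {x \<in> S. f x \<in> A}) \<noteq> {}" using x by blast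
      then have "topspace Y \<inter> \<Inter>\<A> \<noteq> {}" using Ra[OF cl] by blast
      then obtain y where y: "y \<in> topspace Y" "\<And>A. A \<in> \<A> \<Longrightarrow> y \<in> A" by blast
      have "y \<in> K x" unfolding K_def
      proof (rule INT_I)
        fix P assume "P \<in> {P. openin X P \<and> x \<in> P}"
        then have "Y closure_of (f ` (P \<inter> S)) \<in> \<A>" unfolding \<A>_def by blast
        then show "y \<in> closure_theta_omega Y (f ` (P \<inter> S))" by (rule cl_sub[OF y(2)])
      qed
      then show ?thesis by blast
    qed
    have Kuniq: "y1 = y2" if x: "x \<in> topspace X" and y: "y1 \<in> K x" "y2 \<in> K x" for x y1 y2
    proof (rule ccontr)
      assume ne: "y1 \<noteq> y2"
      have yt: "y1 \<in> topspace Y" "y2 \<in> topspace Y" using Ktop[OF x] y by blast+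
      obtain U1 U2 A1 A2 W where sp: "omega_hull Y {y1} U1" "omega_hull Y {y2} U2" "closedin Y A1"
        "closedin Y A2" "A1 \<inter> A2 = {}" "Y closure_of U1 \<subseteq> A1" "Y closure_of U2 \<subseteq> A2"
        using sep[OF fh yt ne] by blast
      have "topspace X \<inter> (\<Inter>A\<in>{A1, A2}. X closure_of {x \<in> S. f x \<in> A}) = {}"
      proof (rule Ra)
        show "\<forall>A\<in>{A1, A2}. closedin Y A" using sp(3,4) by blast
        show "topspace Y \<inter> \<Inter>{A1, A2} = {}" using sp(5) by blast
      qed
      moreover have "x \<in> X closure_of {s \<in> S. f s \<in> A1}" using inK[OF x y(1) sp(1) sp(6)] .
      moreover have "x \<in> X closure_of {s \<in> S. f s \<in> A2}" using inK[OF x y(2) sp(2) sp(7)] .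
      ultimately show False using x by blast
    qed
    define g where "g x = (SOME y. y \<in> K x)" for x
    have Kg: "K x = {g x}" if x: "x \<in> topspace X" for x
    proof -
      have "g x \<in> K x" unfolding g_def using Kne[OF x] by (rule someI_ex)
      then show ?thesis using Kuniq[OF x] by blast
    qed
    have fK: "f x \<in> K x" if x: "x \<in> S" for x
    proof -
      have ftop: "f x \<in> topspace Y" using fS x by blast
      { fix P assume P: "openin X P" "x \<in> P"
        have fx: "f x \<in> f ` (P \<inter> S)" using P(2) x by blast
        have H: "Y closure_of U \<inter> f ` (P \<inter> S) \<noteq> {}" if U: "omega_hull Y {f x} U" for U
        proof -
          have Uo: "openin Y U \<and> f x \<in> U" using hull_open[OF U] .
          have "U \<subseteq> Y closure_of U" by (rule closure_of_subset[OF openin_subset]) (use Uo in blast)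
          then have "f x \<in> Y closure_of U" using Uo by blast
          then have "f x \<in> Y closure_of U \<inter> f ` (P \<inter> S)" using fx by blast
          then show ?thesis by blast
        qed
        have "f x \<in> closure_theta_omega Y (f ` (P \<inter> S))"
          unfolding closure_theta_omega_def using ftop H by blast }
      then show ?thesis unfolding K_def by blast
    qed
    have "continuous_map X Y g"
      unfolding continuous_map_def
    proof (intro conjI allI impI)
      show "g \<in> topspace X \<rightarrow> topspace Y"
      proof
        fix x assume x: "x \<in> topspace X"
        show "g x \<in> topspace Y" using Kg[OF x] Ktop[OF x] by blast
      qed
      fix U assume U: "openin Y U"
      have "{x \<in> topspace X. g x \<in> U} = X_theta_omega X Y S f U" unfolding XK using Kg by auto
      then show "openin X {x \<in> topspace X. g x \<in> U}" using Rb[OF U] by simp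
    qed
    moreover have "\<forall>x\<in>S. g x = f x"
    proof
      fix x assume x: "x \<in> S"
      then have xt: "x \<in> topspace X" using SX by blast
      have "f x \<in> {g x}" using fK[OF x] unfolding Kg[OF xt] .
      then show "g x = f x" by simp
    qed
    ultimately show "\<exists>g. continuous_map X Y g \<and> (\<forall>x\<in>S. g x = f x)" by blast
  qed
qed

end
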